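(* Let $m\ge 1$ and let $F_0=[1,m-1]\supseteq F_1\supseteq F_2$ be sets such that $G=F_0\cup(m+F_1)\cup(2m+F_2)$ is a gapset; let $g=|F_0|+|F_1|+|F_2|$ (the genus of $G$). Define $$\alpha_1(F)=(F_0\sqcup\{m\},F_1,F_2),\qquad \alpha_2(F)=(F_0\sqcup\{m\},F_1\sqcup\{m\},F_2).$$ Then $\alpha_1(F)$ and $\alpha_2(F)$ are gapset filtrations of multiplicity $m+1$ and depth at most $3$, of genus $g+1$ and $g+2$ respectively; that is, $H=[1,m]\cup((m+1)+F_1)\cup(2(m+1)+F_2)$ is a gapset of genus $g+1$ and $H\cup\{2m+1\}$ is a gapset of genus $g+2$.
   Context: A gapset is a finite set $G \subset \mathbb{N}_+$ such that for all $z \in G$, whenever $z=x+y$ with $x,y\in\mathbb{N}_+$, we have $x\in G$ or $y\in G$. Its multiplicity is the least $m\ge1$ with $m\notin G$, its genus is $|G|$, and its depth is $\lceil c/m\rceil$ where $c=\max G+1$ ($c=0$ if $G=\emptyset$). For $m\ge1$, an $m$-filtration is a finite sequence $(F_0,\dots,F_t)$ of sets with $F_0=[1,m-1]\supseteq F_1\supseteq\dots\supseteq F_t$; it is called a gapset filtration if $\tau(F)=\bigcup_i (im+F_i)$ is a gapset; the multiplicity, genus and depth of the gapset filtration are those of $\tau(F)$ (so the genus is $\sum_i|F_i|$ and the multiplicity is $m$). Here $[a,b]=\{z\in\mathbb{Z}:a\le z\le b\}$ and $k+A=\{k+a:a\in A\}$. *)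

theory Defs
  imports Complex_Main
begin

definition gapset :: "nat set \<Rightarrow> bool" where
  "gapset G \<longleftrightarrow> finite G \<and> 0 \<notin> G \<and>
     (\<forall>z\<in>G. \<forall>x y. 0 < x \<and> 0 < y \<and> z = x + y \<longrightarrow> x \<in> G \<or> y \<in> G)"

definition multiplicity :: "nat set \<Rightarrow> nat" where
  "multiplicity G = (LEAST m. 1 \<le> m \<and> m \<notin> G)"

definition genus :: "nat set \<Rightarrow> nat" where
  "genus G = card G"

definition conductor :: "nat set \<Rightarrow> nat" where
  "conductor G = (if G = {} then 0 else Max G + 1)"

definition depth :: "nat set \<Rightarrow> int" where
  "depth G = \<lceil>(real (conductor G)) / real (multiplicity G)\<rceil>"

definition m_filtration :: "nat \<Rightarrow> nat set list \<Rightarrow> bool" where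
  "m_filtration m F \<longleftrightarrow> F \<noteq> [] \<and> F ! 0 = {1..m-1} \<and>
     (\<forall>i. Suc i < length F \<longrightarrow> F ! (Suc i) \<subseteq> F ! i)"

definition tau :: "nat \<Rightarrow> nat set list \<Rightarrow> nat set" where
  "tau m F = (\<Union>i<length F. (\<lambda>a. i * m + a) ` (F ! i))"

definition gapset_filtration :: "nat \<Rightarrow> nat set list \<Rightarrow> bool" where
  "gapset_filtration m F \<longleftrightarrow> m_filtration m F \<and> gapset (tau m F)"

end

theory Submission
  imports Defs
begin

lemma tau3: "tau k [A,B,C] = A \<union> (\<lambda>a. k+a) ` B \<union> (\<lambda>a. 2*k+a) ` C"
proof -
  have "{..<length [A,B,C]} = {0,1,2::nat}" by auto
  then show ?thesis unfolding tau_def by (auto simp: numeral_2_eq_2)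
qed

lemma keyG:
  fixes m :: nat
  assumes hm: "1 \<le> m" and s1: "F1 \<subseteq> {1..m-1}" and s2: "F2 \<subseteq> F1"
    and G: "gapset ({1..m-1} \<union> (\<lambda>a. m+a)`F1 \<union> (\<lambda>a. 2*m+a)`F2)"
    and E: "E \<subseteq> {2*m+1}"
  shows "gapset ({1..m} \<union> (\<lambda>a. (m+1)+a)`F1 \<union> (\<lambda>a. 2*(m+1)+a)`F2 \<union> E)"
    (is "gapset ?H")
proof -
  have f1: "finite F1" using s1 finite_subset by blast
  have f2: "finite F2" using s2 f1 finite_subset by blast
  have fE: "finite E" using E finite_subset by blast
  have Gc: "\<And>z x y. z \<in> {1..m-1} \<union> (\<lambda>a. m+a)`F1 \<union> (\<lambda>a. 2*m+a)`F2 \<Longrightarrow> 0 < x \<Longrightarrow> 0 < y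
     \<Longrightarrow> z = x + y \<Longrightarrow> x \<in> {1..m-1} \<union> (\<lambda>a. m+a)`F1 \<union> (\<lambda>a. 2*m+a)`F2
        \<or> y \<in> {1..m-1} \<union> (\<lambda>a. m+a)`F1 \<union> (\<lambda>a. 2*m+a)`F2"
    using G unfolding gapset_def by blast
  have inF1: "a \<in> F1" if "m + a \<in> {1..m-1} \<union> (\<lambda>a. m+a)`F1 \<union> (\<lambda>a. 2*m+a)`F2" "a \<le> m - 1" for a
  proof -
    from that(1) consider "m + a \<in> {1..m-1}" | "m+a \<in> (\<lambda>a. m+a)`F1" | "m+a \<in> (\<lambda>a. 2*m+a)`F2" by blast
    then show ?thesis
    proof cases
      case 1 then show ?thesis by auto
    next
      case 2 then show ?thesis by auto
    next
      case 3 then obtain b where "b \<in> F2" "m + a = 2*m+b" by auto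
      moreover have "b \<ge> 1" using \<open>b \<in> F2\<close> s1 s2 by auto
      ultimately show ?thesis using that(2) hm by auto
    qed
  qed
  have "\<forall>z\<in>?H. \<forall>x y. 0 < x \<and> 0 < y \<and> z = x + y \<longrightarrow> x \<in> ?H \<or> y \<in> ?H"
  proof (intro ballI allI impI)
    fix z x y assume z: "z \<in> ?H" and xy: "0 < x \<and> 0 < y \<and> z = x + y"
    show "x \<in> ?H \<or> y \<in> ?H"
    proof (cases "x \<le> m \<or> y \<le> m")
      case True then show ?thesis using xy by auto
    next
      case False
      then have xm: "x \<ge> m+1" "y \<ge> m+1" by auto
      from z consider "z \<in> {1..m}" | "z \<in> (\<lambda>a. (m+1)+a)`F1" | "z \<in> (\<lambda>a. 2*(m+1)+a)`F2" | "z \<in> E"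
        by blast
      then show ?thesis
      proof cases
        case 1 then show ?thesis using xm xy by auto
      next
        case 2 then obtain f where "f \<in> F1" "z = m+1+f" by auto
        moreover have "f \<le> m-1" using \<open>f \<in> F1\<close> s1 by auto
        ultimately show ?thesis using xm xy by auto
      next
        case 4 then show ?thesis using xm xy E by auto
      next
        case 3 then obtain f where f: "f \<in> F2" "z = 2*(m+1)+f" by auto
        have fF1: "f \<in> F1" using f s2 by auto
        have fle: "f \<le> m-1" "f \<ge> 1" using fF1 s1 by auto
        define a where "a = x - (m+1)"
        define b where "b = y - (m+1)"
        have ab: "x = m+1+a" "y = m+1+b" "a + b = f" using xm xy f a_def b_def by auto
        show ?thesis
        proof (cases "a = 0")
          case True then have "y = m+1+f" using ab by auto
          then show ?thesis using fF1 by auto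
        next
          case a0: False
          show ?thesis
          proof (cases "b = 0")
            case True then have "x = m+1+f" using ab by auto
            then show ?thesis using fF1 by auto
          next
            case b0: False
            have "2*m+f \<in> {1..m-1} \<union> (\<lambda>a. m+a)`F1 \<union> (\<lambda>a. 2*m+a)`F2" using f by auto
            then have "m+a \<in> {1..m-1} \<union> (\<lambda>a. m+a)`F1 \<union> (\<lambda>a. 2*m+a)`F2
               \<or> m+b \<in> {1..m-1} \<union> (\<lambda>a. m+a)`F1 \<union> (\<lambda>a. 2*m+a)`F2"
            proof -
              have eq: "2*m+f = (m+a)+(m+b)" using ab by simp
              have "0 < m+a" "0 < m+b" using hm by auto
              then show ?thesis using Gc[OF \<open>2*m+f \<in> _\<close> _ _ eq] by blast
            qed
            moreover have "a \<le> m-1" "b \<le> m-1" using ab fle by linarith+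
            ultimately have "a \<in> F1 \<or> b \<in> F1" using inF1 by blast
            then show ?thesis using ab by auto
          qed
        qed
      qed
    qed
  qed
  moreover have "finite ?H" using f1 f2 fE by auto
  moreover have "0 \<notin> ?H" using E by auto
  ultimately show ?thesis unfolding gapset_def by blast
qed

lemma cardH:
  fixes m :: nat
  assumes hm: "1 \<le> m" and s1: "F1 \<subseteq> {1..m-1}" and s2: "F2 \<subseteq> F1"
  shows "card ({1..m} \<union> (\<lambda>a. (m+1)+a)`F1 \<union> (\<lambda>a. 2*(m+1)+a)`F2) = m + card F1 + card F2"
proof -
  have f1: "finite F1" using s1 finite_subset by blast
  have f2: "finite F2" using s2 f1 finite_subset by blast
  have c1: "card ((\<lambda>a. (m+1)+a)`F1) = card F1" by (rule card_image) (auto simp: inj_on_def)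
  have c2: "card ((\<lambda>a. 2*(m+1)+a)`F2) = card F2" by (rule card_image) (auto simp: inj_on_def)
  have d1: "{1..m} \<inter> (\<lambda>a. (m+1)+a)`F1 = {}" by auto
  have d2: "({1..m} \<union> (\<lambda>a. (m+1)+a)`F1) \<inter> (\<lambda>a. 2*(m+1)+a)`F2 = {}" using s1 s2 by auto
  have "card ({1..m} \<union> (\<lambda>a. (m+1)+a)`F1 \<union> (\<lambda>a. 2*(m+1)+a)`F2)
     = card ({1..m} \<union> (\<lambda>a. (m+1)+a)`F1) + card ((\<lambda>a. 2*(m+1)+a)`F2)"
    by (rule card_Un_disjoint[OF _ _ d2]) (use f1 f2 in auto)
  also have "card ({1..m} \<union> (\<lambda>a. (m+1)+a)`F1) = card {1..m} + card ((\<lambda>a. (m+1)+a)`F1)"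
    by (rule card_Un_disjoint[OF _ _ d1]) (use f1 in auto)
  finally show ?thesis using c1 c2 by simp
qed

lemma multH:
  fixes m :: nat
  assumes hm: "1 \<le> m" and E: "E \<subseteq> {2*m+1}" and s1: "F1 \<subseteq> {1..m-1}"
  shows "multiplicity ({1..m} \<union> (\<lambda>a. (m+1)+a)`F1 \<union> (\<lambda>a. 2*(m+1)+a)`F2 \<union> E) = m+1"
  unfolding multiplicity_def
proof (rule Least_equality)
  show "1 \<le> m + 1 \<and> m + 1 \<notin> {1..m} \<union> (\<lambda>a. (m+1)+a)`F1 \<union> (\<lambda>a. 2*(m+1)+a)`F2 \<union> E"
    using hm E s1 by auto
next
  fix y assume "1 \<le> y \<and> y \<notin> {1..m} \<union> (\<lambda>a. (m+1)+a)`F1 \<union> (\<lambda>a. 2*(m+1)+a)`F2 \<union> E"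
  then show "m + 1 \<le> y" by (cases "y \<le> m") auto
qed

lemma depthH:
  fixes m :: nat
  assumes hm: "1 \<le> m" and s1: "F1 \<subseteq> {1..m-1}" and s2: "F2 \<subseteq> F1" and E: "E \<subseteq> {2*m+1}"
  shows "depth ({1..m} \<union> (\<lambda>a. (m+1)+a)`F1 \<union> (\<lambda>a. 2*(m+1)+a)`F2 \<union> E) \<le> 3"
proof -
  let ?H = "{1..m} \<union> (\<lambda>a. (m+1)+a)`F1 \<union> (\<lambda>a. 2*(m+1)+a)`F2 \<union> E"
  have f1: "finite F1" using s1 finite_subset by blast
  have f2: "finite F2" using s2 f1 finite_subset by blast
  have fE: "finite E" using E finite_subset by blast
  have ne: "?H \<noteq> {}" using hm by auto
  have bd: "\<forall>x\<in>?H. x \<le> 3*m+1" using s1 s2 E by fastforce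
  have "Max ?H \<le> 3*m+1" using bd ne f1 f2 fE by (simp add: Max_le_iff)
  then have c: "conductor ?H \<le> 3*(m+1)" unfolding conductor_def using ne by auto
  have "real (conductor ?H) / real (m+1) \<le> 3"
    using c by (simp add: divide_le_eq)
  then have "\<lceil>real (conductor ?H) / real (m+1)\<rceil> \<le> 3" by (simp add: ceiling_le_iff)
  then show ?thesis unfolding depth_def using multH[OF hm E s1] by simp
qed

theorem mainTheorem11:
  fixes m :: nat and F1 F2 :: "nat set"
  assumes hm: "1 \<le> m"
    and hF: "gapset_filtration m [{1..m-1}, F1, F2]"
  shows
    "let g = card {1..m-1} + card F1 + card F2;
         A1 = [{1..m-1} \<union> {m}, F1, F2];
         A2 = [{1..m-1} \<union> {m}, F1 \<union> {m}, F2];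
         H = {1..m} \<union> (\<lambda>a. (m+1) + a) ` F1 \<union> (\<lambda>a. 2*(m+1) + a) ` F2
     in gapset_filtration (m+1) A1 \<and> multiplicity (tau (m+1) A1) = m+1
          \<and> depth (tau (m+1) A1) \<le> 3 \<and> genus (tau (m+1) A1) = g + 1
      \<and> gapset_filtration (m+1) A2 \<and> multiplicity (tau (m+1) A2) = m+1
          \<and> depth (tau (m+1) A2) \<le> 3 \<and> genus (tau (m+1) A2) = g + 2
      \<and> gapset H \<and> card H = g + 1
      \<and> gapset (H \<union> {2*m+1}) \<and> card (H \<union> {2*m+1}) = g + 2"
proof -
  have mf: "m_filtration m [{1..m-1}, F1, F2]" and G0: "gapset (tau m [{1..m-1}, F1, F2])"
    using hF unfolding gapset_filtration_def by auto
  have s1: "F1 \<subseteq> {1..m-1}" using mf unfolding m_filtration_def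
    by (metis Suc_less_eq length_Cons list.size(3) nth_Cons_0 nth_Cons_Suc zero_less_Suc)
  have s2: "F2 \<subseteq> F1" using mf unfolding m_filtration_def
    by (metis One_nat_def Suc_less_eq length_Cons list.size(3) nth_Cons_0 nth_Cons_Suc zero_less_Suc)
  have G: "gapset ({1..m-1} \<union> (\<lambda>a. m+a)`F1 \<union> (\<lambda>a. 2*m+a)`F2)" using G0 by (simp add: tau3)
  define H where "H = {1..m} \<union> (\<lambda>a. (m+1) + a) ` F1 \<union> (\<lambda>a. 2*(m+1) + a) ` F2"
  have m1: "{1..m-1} \<union> {m} = {1..m}" using hm by auto
  have t1: "tau (m+1) [{1..m-1} \<union> {m}, F1, F2] = H \<union> {}"
    unfolding tau3 H_def m1 by simp
  have t2: "tau (m+1) [{1..m-1} \<union> {m}, F1 \<union> {m}, F2] = H \<union> {2*m+1}"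
    unfolding tau3 H_def m1 by auto
  have f1: "finite F1" using s1 finite_subset by blast
  have gH: "gapset (H \<union> {})" "gapset (H \<union> {2*m+1})"
    using keyG[OF hm s1 s2 G, of "{}"] keyG[OF hm s1 s2 G, of "{2*m+1}"] unfolding H_def by auto
  have cH: "card H = m + card F1 + card F2" unfolding H_def by (rule cardH[OF hm s1 s2])
  have nin: "2*m+1 \<notin> H"
  proof
    assume "2*m+1 \<in> H"
    then have "m \<in> F1" unfolding H_def using hm by auto
    then show False using s1 s2 hm by auto
  qed
  have finH: "finite H" using gH unfolding gapset_def by auto
  have cH2: "card (H \<union> {2*m+1}) = card H + 1" using nin finH by simp
  have mu: "multiplicity (H \<union> {}) = m+1" "multiplicity (H \<union> {2*m+1}) = m+1"
    using multH[OF hm _ s1, of "{}"] multH[OF hm _ s1, of "{2*m+1}"] unfolding H_def by auto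
  have de: "depth (H \<union> {}) \<le> 3" "depth (H \<union> {2*m+1}) \<le> 3"
    using depthH[OF hm s1 s2, of "{}"] depthH[OF hm s1 s2, of "{2*m+1}"] unfolding H_def by auto
  have s1': "F1 \<subseteq> {1..m}" using s1 by force
  have mf1: "m_filtration (m+1) [{1..m-1} \<union> {m}, F1, F2]"
    unfolding m_filtration_def m1 using s1' s2 hm by (auto simp: less_Suc_eq nth_Cons')
  have mf2: "m_filtration (m+1) [{1..m-1} \<union> {m}, F1 \<union> {m}, F2]"
    unfolding m_filtration_def m1 using s1' s2 hm by (auto simp: less_Suc_eq nth_Cons')
  have cm: "card {1..m-1} = m - 1" by simp
  show ?thesis
    unfolding Let_def H_def[symmetric] gapset_filtration_def t1 t2 genus_def
    using gH cH cH2 mu de mf1 mf2 cm hm by simp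
qed

end
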